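(* Let $i,p\ge-1$, $q\ge0$, $0\le j\le 2^i$, $0\le m\le 2^p$, $0\le n\le 2^q$, and let $F(t):=\int_0^t\varphi_{pm}(s)\chi_{qn}(s)\,ds$. Then the coefficient $F_{ij}$ of $F$ satisfies \[ |F_{ij}|\le 2^{-2(i\vee p\vee q)+p+q}, \] except in the case $p<q=i$, in which one has $|F_{ij}|\le1$.
   Context: Index set: pairs $(p,m)$ with either $p=-1,m=0$, or $p\in\mathbb{N}=\{0,1,2,\dots\}$ and $0\le m\le 2^p$. For $p\in\mathbb{N}$, $1\le m\le 2^p$ set $t^0_{pm}=(m-1)2^{-p}$, $t^1_{pm}=(2m-1)2^{-p-1}$, $t^2_{pm}=m2^{-p}$. Rescaled Haar functions: for $p\in\mathbb{N}$, $1\le m\le 2^p$, $\chi_{pm}=2^p$ on $[t^0_{pm},t^1_{pm})$, $=-2^p$ on $[t^1_{pm},t^2_{pm})$, $=0$ elsewhere; $\chi_{00}\equiv1$; $\chi_{p0}\equiv0$ for $p\ge1$. Rescaled Schauder functions: $\varphi_{pm}(t)=\int_0^t\chi_{pm}(s)\,ds$ for $p\in\mathbb{N}$, and $\varphi_{-10}\equiv1$. For continuous $f:[0,1]\to\mathbb{R}$ the coefficients are $f_{-10}=f(0)$, $f_{00}=f(1)-f(0)$, $f_{p0}=0$ for $p\ge1$, $f_{pm}=2f(t^1_{pm})-f(t^0_{pm})-f(t^2_{pm})$ for $p\in\mathbb{N},m\ge1$. $a\vee b=\max(a,b)$. *)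

theory Defs
  imports "HOL-Analysis.Analysis"
begin

definition valid_index :: "int \<Rightarrow> nat \<Rightarrow> bool" where
  "valid_index p m \<longleftrightarrow> (p = -1 \<and> m = 0) \<or> (p \<ge> 0 \<and> m \<le> 2 ^ nat p)"

definition t0 :: "nat \<Rightarrow> nat \<Rightarrow> real" where
  "t0 p m = (real m - 1) / 2 ^ p"
definition t1 :: "nat \<Rightarrow> nat \<Rightarrow> real" where
  "t1 p m = (2 * real m - 1) / 2 ^ (p + 1)"
definition t2 :: "nat \<Rightarrow> nat \<Rightarrow> real" where
  "t2 p m = real m / 2 ^ p"

definition haar :: "nat \<Rightarrow> nat \<Rightarrow> real \<Rightarrow> real" where
  "haar p m t =
     (if m = 0 then (if p = 0 then 1 else 0)
      else if t0 p m \<le> t \<and> t < t1 p m then 2 ^ p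
      else if t1 p m \<le> t \<and> t < t2 p m then - (2 ^ p)
      else 0)"

definition schauder :: "int \<Rightarrow> nat \<Rightarrow> real \<Rightarrow> real" where
  "schauder p m t = (if p < 0 then 1 else integral {0..t} (haar (nat p) m))"

definition coeff :: "(real \<Rightarrow> real) \<Rightarrow> int \<Rightarrow> nat \<Rightarrow> real" where
  "coeff f p m =
     (if p < 0 then f 0
      else if m = 0 then (if p = 0 then f 1 - f 0 else 0)
      else 2 * f (t1 (nat p) m) - f (t0 (nat p) m) - f (t2 (nat p) m))"

end

theory Submission
  imports Defs
begin

lemma bm_integrable:
  fixes f :: "real \<Rightarrow> real"
  assumes "f \<in> borel_measurable borel" "\<And>x. x \<in> {a..b} \<Longrightarrow> \<bar>f x\<bar> \<le> B"
  shows "f integrable_on {a..b}"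
proof -
  have "f \<in> borel_measurable (lebesgue_on {a..b})"
    using assms(1) by (simp add: measurable_completion measurable_restrict_space1)
  then have "f absolutely_integrable_on {a..b}"
    by (rule measurable_bounded_by_integrable_imp_absolutely_integrable[where g="\<lambda>_. B"]) (use assms(2) in auto)
  then show ?thesis using absolutely_integrable_on_def by blast
qed

lemma piece:
  fixes f :: "real \<Rightarrow> real"
  assumes "x \<le> y" "\<And>s. x < s \<Longrightarrow> s < y \<Longrightarrow> f s = c"
  shows "(f has_integral c*(y-x)) {x..y}"
proof -
  have "((\<lambda>_. c) has_integral c*(y-x)) {x..y}"
    using has_integral_const_real[of c x y] assms(1) by (simp add: mult.commute)
  then show ?thesis
    by (rule has_integral_spike_finite[of "{x,y}", rotated 2]) (use assms in auto)
qed

lemma piece_int: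
  fixes f :: "real \<Rightarrow> real"
  assumes "x \<le> y" "\<And>s. x < s \<Longrightarrow> s < y \<Longrightarrow> f s = c"
  shows "integral {x..y} f = c*(y-x)"
  using piece[OF assms] by (rule integral_unique)

lemma comb:
  fixes f :: "real \<Rightarrow> real"
  assumes "\<And>a b. f integrable_on {a..b}" "x \<le> y" "y \<le> z"
  shows "integral {x..z} f = integral {x..y} f + integral {y..z} f"
  using Henstock_Kurzweil_Integration.integral_combine[OF assms(2,3) assms(1)] by simp

lemma haar_meas: "haar p m \<in> borel_measurable borel"
  unfolding haar_def by measurable

lemma haar_bound: "\<bar>haar p m s\<bar> \<le> 2 ^ p"
  unfolding haar_def by auto

lemma haar_int: "haar p m integrable_on {a..b}"
  by (rule bm_integrable[OF haar_meas haar_bound])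

lemma t_facts:
  "t0 P m = (2*real m - 2) / 2^(P+1)" "t2 P m = (2*real m) / 2^(P+1)"
  "2^P * (1/2^(P+1)) = (1/2::real)"
  unfolding t0_def t2_def by (auto simp: field_simps)

lemma sch_formula:
  "integral {0..t} (haar P m) = (if m = 0 then (if P = 0 then max 0 t else 0)
      else 2^P * max 0 (min (t - t0 P m) (t2 P m - t)))"
proof (cases "t < 0")
  case True
  then have "{0..t} = ({}::real set)" by auto
  moreover have "m \<noteq> 0 \<Longrightarrow> t0 P m \<ge> 0" unfolding t0_def by auto
  ultimately show ?thesis using True by auto
next
  case False
  then have t: "t \<ge> 0" by simp
  define h :: real where "h = 1/2^(P+1)"
  have h: "h > 0" "2^P * h = 1/2" unfolding h_def by (auto simp: field_simps)
  show ?thesis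
  proof (cases "m = 0")
    case True
    have "integral {0..t} (haar P m) = (if P = 0 then 1 else 0) * (t - 0)"
      by (rule piece_int) (use t True in \<open>auto simp: haar_def\<close>)
    then show ?thesis using True t by auto
  next
    case m: False
    define a where "a = t0 P m"
    define b where "b = t1 P m"
    define c where "c = t2 P m"
    have abc: "a = (2*real m - 2)*h" "b = (2*real m - 1)*h" "c = 2*real m*h"
      unfolding a_def b_def c_def h_def t0_def t1_def t2_def by (auto simp: field_simps)
    have a0: "a \<ge> 0" using abc m h by auto
    have ab: "a < b" "b < c" using abc h by auto
    have hv: "\<And>s. haar P m s = (if a \<le> s \<and> s < b then 2^P else if b \<le> s \<and> s < c then -(2^P) else 0)"
      using m unfolding haar_def a_def b_def c_def by auto
    have cmb: "\<And>x y z. x \<le> y \<Longrightarrow> y \<le> z \<Longrightarrow> integral {x..z} (haar P m) = integral {x..y} (haar P m) + integral {y..z} (haar P m)"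
      by (rule comb[OF haar_int])
    have I0: "\<And>y. 0 \<le> y \<Longrightarrow> y \<le> a \<Longrightarrow> integral {0..y} (haar P m) = 0*(y-0)"
      by (rule piece_int) (use ab in \<open>auto simp: hv\<close>)
    have I1: "\<And>y. a \<le> y \<Longrightarrow> y \<le> b \<Longrightarrow> integral {a..y} (haar P m) = 2^P*(y-a)"
      by (rule piece_int) (use ab in \<open>auto simp: hv\<close>)
    have I2: "\<And>y. b \<le> y \<Longrightarrow> y \<le> c \<Longrightarrow> integral {b..y} (haar P m) = -(2^P)*(y-b)"
      by (rule piece_int) (use ab in \<open>auto simp: hv\<close>)
    have I3: "\<And>y. c \<le> y \<Longrightarrow> integral {c..y} (haar P m) = 0*(y-c)"
      by (rule piece_int) (use ab in \<open>auto simp: hv\<close>)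
    have hab: "b - a = h" "c - b = h" using abc by (auto simp: algebra_simps)
    then have e1: "2^P*(b-a) = (1/2::real)" "2^P*(c-b) = (1/2::real)" using h by auto
    consider "t \<le> a" | "a \<le> t" "t \<le> b" | "b \<le> t" "t \<le> c" | "c \<le> t" by linarith
    then have "integral {0..t} (haar P m) = 2^P * max 0 (min (t - a) (c - t))"
    proof cases
      case 1 then show ?thesis using I0 t by auto
    next
      case 2
      have "integral {0..t} (haar P m) = 0 + 2^P*(t-a)" using cmb[of 0 a t] I0[of a] I1[of t] 2 a0 by auto
      moreover have "min (t - a) (c - t) = t - a" unfolding min_def using 2 hab by auto
      ultimately show ?thesis using 2 by auto
    next
      case 3
      have "integral {0..t} (haar P m) = 0 + 2^P*(b-a) + (-(2^P)*(t-b))"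
        using cmb[of 0 a t] cmb[of a b t] I0[of a] I1[of b] I2[of t] 3 a0 ab by auto
      moreover have "min (t - a) (c - t) = c - t" unfolding min_def using 3 hab by auto
      moreover have "2^P*(b-a) + (-(2^P)*(t-b)) = (2::real)^P*(c-t)" using e1 by (auto simp: algebra_simps)
      ultimately show ?thesis using 3 by auto
    next
      case 4
      have "integral {0..t} (haar P m) = 0 + 2^P*(b-a) + (-(2^P)*(c-b)) + 0"
        using cmb[of 0 a t] cmb[of a b t] cmb[of b c t] I0[of a] I1[of b] I2[of c] I3[of t] 4 a0 ab by auto
      then show ?thesis using 4 e1 by auto
    qed
    then show ?thesis using m a_def c_def by simp
  qed
qed

definition sform :: "nat \<Rightarrow> nat \<Rightarrow> real \<Rightarrow> real" where
  "sform P m t = (if m = 0 then (if P = 0 then max 0 t else 0)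
      else 2^P * max 0 (min (t - t0 P m) (t2 P m - t)))"

lemma sch_eq: "p \<ge> 0 \<Longrightarrow> schauder p m = sform (nat p) m"
  unfolding schauder_def sform_def using sch_formula by auto

lemma sform_meas: "sform P m \<in> borel_measurable borel"
  unfolding sform_def by measurable

lemma sch_meas: "schauder p m \<in> borel_measurable borel"
proof (cases "p \<ge> 0")
  case True then show ?thesis using sch_eq sform_meas by simp
next
  case False then have "schauder p m = (\<lambda>_. 1)" unfolding schauder_def by auto
  then show ?thesis by simp
qed

lemma sform_half:
  assumes "m \<noteq> 0" shows "\<bar>sform P m s\<bar> \<le> 1/2"
proof -
  have "t2 P m - t0 P m = 1/2^P" unfolding t0_def t2_def by (auto simp: field_simps)
  then have "min (s - t0 P m) (t2 P m - s) \<le> 1/2 * (1/2^P)" by linarith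
  then have "2^P * max 0 (min (s - t0 P m) (t2 P m - s)) \<le> 2^P * (1/2 * (1/2^P))"
    by (intro mult_left_mono) auto
  then show ?thesis using assms unfolding sform_def by auto
qed

lemma sform_supp:
  assumes "m \<noteq> 0" "s \<le> t0 P m \<or> t2 P m \<le> s" shows "sform P m s = 0"
  using assms unfolding sform_def by auto

lemma sch_bound_any: "\<bar>schauder p m s\<bar> \<le> 1 + \<bar>s\<bar>"
proof (cases "p \<ge> 0")
  case True
  then have "schauder p m s = sform (nat p) m s" using sch_eq by simp
  moreover have "\<bar>sform (nat p) m s\<bar> \<le> 1 + \<bar>s\<bar>"
  proof (cases "m = 0")
    case False then show ?thesis using sform_half[of m "nat p" s] by linarith
  qed (auto simp: sform_def)
  ultimately show ?thesis by simp
qed (auto simp: schauder_def)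

lemma sch_bound01: "0 \<le> s \<Longrightarrow> s \<le> 1 \<Longrightarrow> \<bar>schauder p m s\<bar> \<le> 1"
proof (cases "p \<ge> 0")
  case True
  assume "0 \<le> s" "s \<le> 1"
  then have "schauder p m s = sform (nat p) m s" using sch_eq True by simp
  moreover have "\<bar>sform (nat p) m s\<bar> \<le> 1"
  proof (cases "m = 0")
    case False then show ?thesis using sform_half[of m "nat p" s] by linarith
  qed (use \<open>0 \<le> s\<close> \<open>s \<le> 1\<close> in \<open>auto simp: sform_def\<close>)
  ultimately show ?thesis by simp
qed (auto simp: schauder_def)

definition gg :: "int \<Rightarrow> nat \<Rightarrow> nat \<Rightarrow> nat \<Rightarrow> real \<Rightarrow> real" where
  "gg p m q n s = schauder p m s * haar q n s"

lemma gg_int: "gg p m q n integrable_on {a..b}"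
proof (rule bm_integrable)
  show "gg p m q n \<in> borel_measurable borel" unfolding gg_def
    using sch_meas haar_meas by measurable
  fix x assume x: "x \<in> {a..b}"
  have "\<bar>gg p m q n x\<bar> = \<bar>schauder p m x\<bar> * \<bar>haar q n x\<bar>" unfolding gg_def by (simp add: abs_mult)
  also have "\<dots> \<le> (1 + (\<bar>a\<bar> + \<bar>b\<bar>)) * 2^q"
    using sch_bound_any[of p m x] haar_bound[of q n x] x
    by (intro mult_mono) auto
  finally show "\<bar>gg p m q n x\<bar> \<le> (1 + (\<bar>a\<bar> + \<bar>b\<bar>)) * 2^q" .
qed

lemma sch_aff:
  assumes "p \<ge> 0" "0 \<le> a" "\<And>s. a \<le> s \<Longrightarrow> s < b \<Longrightarrow> haar (nat p) m s = c" "a \<le> s" "s \<le> b"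
  shows "schauder p m s = schauder p m a + c*(s-a)"
proof -
  have "integral {0..s} (haar (nat p) m) = integral {0..a} (haar (nat p) m) + integral {a..s} (haar (nat p) m)"
    by (rule comb[OF haar_int]) (use assms in auto)
  moreover have "integral {a..s} (haar (nat p) m) = c*(s-a)"
    by (rule piece_int) (use assms in auto)
  ultimately show ?thesis using assms unfolding schauder_def by auto
qed

lemma dy:
  fixes T k r :: nat and s :: real
  assumes "real k / 2^r \<le> s" "s < (real k + 1) / 2^r"
  shows "(real T / 2^r \<le> s \<longleftrightarrow> T \<le> k) \<and> (s < real T / 2^r \<longleftrightarrow> k < T)"
proof -
  define x where "x = s * 2^r"
  have x: "real k \<le> x" "x < real k + 1" using assms unfolding x_def by (auto simp: field_simps)
  have e1: "real T / 2^r \<le> s \<longleftrightarrow> real T \<le> x" unfolding x_def by (auto simp: field_simps)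
  have e2: "s < real T / 2^r \<longleftrightarrow> x < real T" unfolding x_def by (auto simp: field_simps)
  have "real T \<le> x \<longleftrightarrow> T \<le> k"
  proof
    assume "real T \<le> x" then have "real T < real k + 1" using x by linarith
    then show "T \<le> k" by linarith
  next
    assume "T \<le> k" then show "real T \<le> x" using x by linarith
  qed
  moreover have "x < real T \<longleftrightarrow> k < T"
  proof
    assume "x < real T" then show "k < T" using x by linarith
  next
    assume "k < T" then have "real k + 1 \<le> real T" by linarith
    then show "x < real T" using x by linarith
  qed
  ultimately show ?thesis using e1 e2 by blast
qed

lemma t_scale:
  assumes "q < r" "n \<ge> 1"
  shows "t0 q n = real ((n-1)*2^(r-q)) / 2^r" "t1 q n = real ((2*n-1)*2^(r-q-1)) / 2^r"
        "t2 q n = real (n*2^(r-q)) / 2^r"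
proof -
  have e1: "q + (r-q) = r" "(q+1) + (r-q-1) = r" using assms by auto
  have r1: "(2::real)^r = 2^q * 2^(r-q)" by (metis e1(1) power_add)
  have r2: "(2::real)^r = 2^(q+1) * 2^(r-q-1)" by (metis e1(2) power_add)
  show "t0 q n = real ((n-1)*2^(r-q)) / 2^r" unfolding t0_def r1 using assms by (simp add: of_nat_diff)
  show "t1 q n = real ((2*n-1)*2^(r-q-1)) / 2^r" unfolding t1_def r2 using assms by (simp add: of_nat_diff)
  show "t2 q n = real (n*2^(r-q)) / 2^r" unfolding t2_def r1 by simp
qed

lemma haar_const:
  fixes k r q n :: nat
  assumes "q < r" "real k / 2^r \<le> s" "s < (real k + 1) / 2^r"
  shows "haar q n s = haar q n (real k / 2^r)"
proof (cases "n = 0")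
  case True then show ?thesis unfolding haar_def by simp
next
  case False
  have k: "real k / 2^r \<le> real k / 2^r" "real k / 2^r < (real k + 1) / 2^r" by (auto simp: divide_strict_right_mono)
  have n1: "n \<ge> 1" using False by simp
  define T0 where "T0 = (n-1)*2^(r-q)"
  define T1 where "T1 = (2*n-1)*2^(r-q-1)"
  define T2 where "T2 = n*2^(r-q)"
  have A: "haar q n x = (if T0 \<le> k \<and> k < T1 then 2^q else if T1 \<le> k \<and> k < T2 then -(2^q) else 0)"
    if "real k / 2^r \<le> x" "x < (real k + 1) / 2^r" for x
  proof -
    note d0 = dy[OF that, of T0] and d1 = dy[OF that, of T1] and d2 = dy[OF that, of T2]
    show ?thesis unfolding haar_def t_scale[OF assms(1) n1] T0_def[symmetric] T1_def[symmetric] T2_def[symmetric]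
      using False d0 d1 d2 by simp
  qed
  show ?thesis using A[OF assms(2,3)] A[OF k] by simp
qed

lemma sch_affine:
  fixes k r :: nat
  assumes "p < 0 \<or> nat p < r"
  shows "\<exists>aa bb. \<bar>bb\<bar> \<le> 2 powr p \<and> (\<forall>s. real k/2^r \<le> s \<and> s \<le> (real k+1)/2^r \<longrightarrow> schauder p m s = aa + bb * s)"
proof (cases "p < 0")
  case True
  then show ?thesis by (intro exI[of _ 1] exI[of _ 0]) (auto simp: schauder_def)
next
  case False
  define a where "a = real k/2^r"
  define c where "c = haar (nat p) m a"
  have pr: "nat p < r" using assms False by auto
  have hc: "haar (nat p) m s = c" if "a \<le> s" "s < (real k+1)/2^r" for s
    unfolding c_def a_def by (rule haar_const[OF pr]) (use that in \<open>simp_all add: a_def\<close>)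
  have a0: "0 \<le> a" unfolding a_def by simp
  have p0: "p \<ge> 0" using False by simp
  have "\<bar>c\<bar> \<le> 2 ^ nat p" unfolding c_def by (rule haar_bound)
  also have "(2::real) ^ nat p = 2 powr p" using False by (simp add: powr_realpow[symmetric])
  finally have cb: "\<bar>c\<bar> \<le> 2 powr p" .
  have "\<forall>s. a \<le> s \<and> s \<le> (real k+1)/2^r \<longrightarrow> schauder p m s = (schauder p m a - c*a) + c * s"
  proof (intro allI impI)
    fix s assume s: "a \<le> s \<and> s \<le> (real k+1)/2^r"
    have "schauder p m s = schauder p m a + c*(s-a)"
      using sch_aff[of p a "(real k+1)/2^r" m c s, OF p0 a0 hc] s by blast
    then show "schauder p m s = (schauder p m a - c*a) + c * s" by (simp add: algebra_simps)
  qed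
  then show ?thesis using cb unfolding a_def by blast
qed

lemma aff_int:
  fixes f :: "real \<Rightarrow> real"
  assumes "x \<le> y" "\<And>s. x < s \<Longrightarrow> s < y \<Longrightarrow> f s = c*(aa+bb * s)"
  shows "integral {x..y} f = c*(aa*(y-x) + bb*(y^2-x^2)/2)"
proof -
  define F where "F s = c*(aa * s + bb * s^2/2)" for s
  have "((\<lambda>s. c*(aa+bb * s)) has_integral F y - F x) {x..y}"
  proof (rule fundamental_theorem_of_calculus[OF assms(1)])
    fix s assume "s \<in> {x..y}"
    show "(F has_vector_derivative c*(aa+bb * s)) (at s within {x..y})"
      unfolding F_def has_real_derivative_iff_has_vector_derivative[symmetric]
      by (auto intro!: derivative_eq_intros simp: algebra_simps)
  qed
  then have "(f has_integral F y - F x) {x..y}"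
    by (rule has_integral_spike_finite[of "{x,y}", rotated 2]) (use assms in auto)
  then have "integral {x..y} f = F y - F x" by (rule integral_unique)
  then show ?thesis unfolding F_def by (simp add: field_simps)
qed

lemma crude:
  fixes f :: "real \<Rightarrow> real"
  assumes "\<And>a b. f integrable_on {a..b}" "x \<le> y" "\<And>s. x \<le> s \<Longrightarrow> s \<le> y \<Longrightarrow> \<bar>f s\<bar> \<le> K"
  shows "\<bar>integral {x..y} f\<bar> \<le> K*(y-x)"
proof -
  have K: "0 \<le> K" using assms(2) assms(3)[of x] by force
  have "norm (integral {x..y} f) \<le> K * Henstock_Kurzweil_Integration.content (cbox x y)"
    by (rule has_integral_bound[OF K]) (use assms in auto)
  then show ?thesis using assms(2) by simp
qed

lemma crude_supp:
  fixes f :: "real \<Rightarrow> real"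
  assumes "\<And>a b. f integrable_on {a..b}" "x \<le> y" "c \<le> d" "0 \<le> K"
    "\<And>s. x \<le> s \<Longrightarrow> s \<le> y \<Longrightarrow> \<bar>f s\<bar> \<le> K"
    "\<And>s. s < c \<or> d < s \<Longrightarrow> f s = 0"
  shows "\<bar>integral {x..y} f\<bar> \<le> K*(d-c)"
proof (cases "y \<le> c \<or> d \<le> x")
  case True
  then have "integral {x..y} f = 0*(y-x)" by (intro piece_int) (use assms in auto)
  then show ?thesis using assms by simp
next
  case False
  define u where "u = max x c"
  define v where "v = min y d"
  have uv: "x \<le> u" "u \<le> v" "v \<le> y" using False assms unfolding u_def v_def by auto
  have "integral {x..y} f = integral {x..u} f + integral {u..v} f + integral {v..y} f"
    using comb[OF assms(1), of x u y] comb[OF assms(1), of u v y] uv by simp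
  moreover have "integral {x..u} f = 0*(u-x)" by (intro piece_int) (use assms uv in \<open>auto simp: u_def\<close>)
  moreover have "integral {v..y} f = 0*(y-v)" by (intro piece_int) (use assms uv in \<open>auto simp: v_def\<close>)
  moreover have "\<bar>integral {u..v} f\<bar> \<le> K*(v-u)" by (rule crude) (use assms uv in auto)
  moreover have "K*(v-u) \<le> K*(d-c)" using assms(4) by (intro mult_left_mono) (auto simp: u_def v_def)
  ultimately show ?thesis by simp
qed

lemma t_ord: "t0 q n \<le> t1 q n" "t1 q n \<le> t2 q n"
  unfolding t0_def t1_def t2_def by (auto simp: field_simps)

lemma caseB:
  fixes I j q n :: nat
  assumes "q < I" "p < 0 \<or> nat p < I" "j \<ge> 1"
  shows "\<bar>integral {t0 I j..t1 I j} (gg p m q n) - integral {t1 I j..t2 I j} (gg p m q n)\<bar>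
         \<le> 2^q * 2 powr p * (1/2^(I+1))^2"
proof -
  define k where "k = j - 1"
  define h :: real where "h = 1/2^(I+1)"
  define a where "a = real k/2^I"
  have h0: "h > 0" unfolding h_def by simp
  have rk: "real k = real j - 1" unfolding k_def using assms(3) by (simp add: of_nat_diff)
  have ta: "t0 I j = a" "t1 I j = a + h" "t2 I j = a + 2*h" "(real k+1)/2^I = a+2*h"
    unfolding t0_def t1_def t2_def a_def h_def rk by (auto simp: field_simps)
  obtain aa bb where bb: "\<bar>bb\<bar> \<le> 2 powr p"
    and aff: "\<forall>s. real k/2^I \<le> s \<and> s \<le> (real k+1)/2^I \<longrightarrow> schauder p m s = aa + bb * s"
    using sch_affine[OF assms(2), of k m] by blast
  define c where "c = haar q n a"
  have hq: "haar q n s = c" if "a \<le> s" "s < a+2*h" for s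
    unfolding c_def a_def by (rule haar_const[OF assms(1)]) (use that ta in \<open>simp_all add: a_def\<close>)
  have g: "gg p m q n s = c*(aa+bb * s)" if "a \<le> s" "s < a+2*h" for s
    using aff hq[OF that] that ta unfolding gg_def a_def by (simp add: mult.commute)
  have G1: "integral {a..a+h} (gg p m q n) = c*(aa*((a+h)-a) + bb*((a+h)^2-a^2)/2)"
    by (rule aff_int) (use h0 g in auto)
  have G2: "integral {a+h..a+2*h} (gg p m q n) = c*(aa*((a+2*h)-(a+h)) + bb*((a+2*h)^2-(a+h)^2)/2)"
    by (rule aff_int) (use h0 g in auto)
  have "integral {t0 I j..t1 I j} (gg p m q n) - integral {t1 I j..t2 I j} (gg p m q n) = -(c*bb*h^2)"
    unfolding ta G1 G2 by (simp add: algebra_simps power2_eq_square)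
  moreover have "\<bar>c\<bar> \<le> 2^q" unfolding c_def by (rule haar_bound)
  ultimately have "\<bar>integral {t0 I j..t1 I j} (gg p m q n) - integral {t1 I j..t2 I j} (gg p m q n)\<bar> = \<bar>c\<bar>*\<bar>bb\<bar>*h^2"
    by (simp add: abs_mult)
  also have "\<dots> \<le> 2^q * 2 powr p * h^2"
    using bb \<open>\<bar>c\<bar> \<le> 2^q\<close> by (intro mult_mono) auto
  finally show ?thesis unfolding h_def .
qed

lemma caseA_J:
  fixes q n :: nat
  assumes "n \<ge> 1" "p < 0 \<or> nat p < q"
  shows "\<bar>integral {t0 q n..t2 q n} (gg p m q n)\<bar> \<le> 2^q * 2 powr p * (1/2^(q+1))^2"
proof -
  define k where "k = n - 1"
  define h :: real where "h = 1/2^(q+1)"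
  define a where "a = real k/2^q"
  have h0: "h > 0" unfolding h_def by simp
  have rk: "real k = real n - 1" unfolding k_def using assms(1) by (simp add: of_nat_diff)
  have ta: "t0 q n = a" "t1 q n = a + h" "t2 q n = a + 2*h" "(real k+1)/2^q = a+2*h"
    unfolding t0_def t1_def t2_def a_def h_def rk by (auto simp: field_simps)
  obtain aa bb where bb: "\<bar>bb\<bar> \<le> 2 powr p"
    and aff: "\<forall>s. real k/2^q \<le> s \<and> s \<le> (real k+1)/2^q \<longrightarrow> schauder p m s = aa + bb * s"
    using sch_affine[OF assms(2), of k m] by blast
  have g1: "gg p m q n s = 2^q*(aa+bb * s)" if "a < s" "s < a+h" for s
    using aff that ta h0 assms(1) unfolding gg_def haar_def a_def by (auto simp: mult.commute)
  have g2: "gg p m q n s = (-(2^q))*(aa+bb * s)" if "a+h < s" "s < a+2*h" for s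
    using aff that ta h0 assms(1) unfolding gg_def haar_def a_def by (auto simp: mult.commute)
  have G1: "integral {a..a+h} (gg p m q n) = 2^q*(aa*((a+h)-a) + bb*((a+h)^2-a^2)/2)"
    by (rule aff_int) (use h0 g1 in auto)
  have G2: "integral {a+h..a+2*h} (gg p m q n) = (-(2^q))*(aa*((a+2*h)-(a+h)) + bb*((a+2*h)^2-(a+h)^2)/2)"
    by (rule aff_int) (use h0 g2 in auto)
  have "integral {a..a+2*h} (gg p m q n) = integral {a..a+h} (gg p m q n) + integral {a+h..a+2*h} (gg p m q n)"
    by (rule comb[OF gg_int]) (use h0 in auto)
  also have "\<dots> = -(2^q*bb*h^2)"
    unfolding G1 G2 by (simp add: field_simps power2_eq_square)
  finally have "\<bar>integral {t0 q n..t2 q n} (gg p m q n)\<bar> = 2^q*\<bar>bb\<bar>*h^2"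
    unfolding ta by (simp add: abs_mult)
  also have "\<dots> \<le> 2^q * 2 powr p * h^2"
    using bb by (intro mult_mono) auto
  finally show ?thesis unfolding h_def .
qed

lemma caseA_half:
  fixes q n X Y :: nat
  assumes "n \<ge> 1" "p < 0 \<or> nat p < q" "x \<le> y" "x = real X/2^q" "y = real Y/2^q"
  shows "\<bar>integral {x..y} (gg p m q n)\<bar> \<le> 2^q * 2 powr p * (1/2^(q+1))^2"
proof -
  have B0: "0 \<le> (2::real)^q * 2 powr p * (1/2^(q+1))^2" by simp
  have z: "gg p m q n s = 0" if "s < t0 q n \<or> t2 q n \<le> s" for s
    using that t_ord[of q n] assms(1) unfolding gg_def haar_def by auto
  have t02: "t0 q n = real (n-1)/2^q" "t2 q n = real n/2^q"
    unfolding t0_def t2_def using assms(1) by (auto simp: of_nat_diff)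
  have le: "\<And>A B::nat. A \<le> B \<Longrightarrow> real A/2^q \<le> real B/2^q" by (simp add: divide_right_mono)
  consider "Y \<le> n-1" | "n \<le> X" | "X \<le> n-1" "n \<le> Y" by linarith
  then show ?thesis
  proof cases
    case 1
    then have "y \<le> t0 q n" using le[OF 1] assms(5) t02 by simp
    then have "integral {x..y} (gg p m q n) = 0*(y-x)" by (intro piece_int) (use assms z in auto)
    then show ?thesis using B0 by simp
  next
    case 2
    then have "t2 q n \<le> x" using le[OF 2] assms(4) t02 by simp
    then have "integral {x..y} (gg p m q n) = 0*(y-x)" by (intro piece_int) (use assms z in auto)
    then show ?thesis using B0 by simp
  next
    case 3
    have xa: "x \<le> t0 q n" using le[OF 3(1)] assms(4) t02 by simp
    have by2: "t2 q n \<le> y" using le[OF 3(2)] assms(5) t02 by simp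
    have a2: "t0 q n \<le> t2 q n" unfolding t0_def t2_def by (simp add: divide_right_mono)
    have "integral {x..y} (gg p m q n) = integral {x..t0 q n} (gg p m q n) + integral {t0 q n..t2 q n} (gg p m q n) + integral {t2 q n..y} (gg p m q n)"
      using comb[OF gg_int, of x "t0 q n" y] comb[OF gg_int, of "t0 q n" "t2 q n" y] xa by2 a2 by simp
    moreover have "integral {x..t0 q n} (gg p m q n) = 0*(t0 q n - x)" by (intro piece_int) (use xa z in auto)
    moreover have "integral {t2 q n..y} (gg p m q n) = 0*(y - t2 q n)" by (intro piece_int) (use by2 z in auto)
    ultimately show ?thesis using caseA_J[OF assms(1,2), of m] by simp
  qed
qed

lemma pw1: "(2::real)^a * 2 powr p * (1/2^b)^2 = 2 powr (real a + p - 2*real b)"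
proof -
  have "(2::real) powr (2 * real b) = 2^b * 2^b"
    by (metis mult_2 powr_add powr_realpow zero_less_numeral)
  then show ?thesis by (simp add: powr_add powr_diff powr_realpow power2_eq_square powr_mult_base)
qed

lemma pw2: "(2::real)^a * (1/2^b) = 2 powr (real a - real b)"
  by (simp add: powr_diff powr_realpow)

theorem mainTheorem4:
  fixes i p :: int and q j m n :: nat and F :: "real \<Rightarrow> real"
  assumes "valid_index i j" and "valid_index p m" and "n \<le> 2 ^ q"
  defines "F \<equiv> (\<lambda>t. integral {0..t} (\<lambda>s. schauder p m s * haar q n s))"
  shows "if p < int q \<and> int q = i
         then \<bar>coeff F i j\<bar> \<le> 1
         else \<bar>coeff F i j\<bar> \<le> 2 powr (real_of_int (- 2 * max i (max p (int q)) + p + int q))"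
proof -
  have Fg: "F = (\<lambda>t. integral {0..t} (gg p m q n))" unfolding F_def gg_def by simp
  define B where "B = 2 powr (real_of_int (- 2 * max i (max p (int q)) + p + int q))"
  have B0: "0 \<le> B" unfolding B_def by simp
  have zc: "coeff F i j = 0" if "gg p m q n = (\<lambda>_. 0)"
    unfolding coeff_def Fg that by simp
  have key: "\<bar>coeff F i j\<bar> \<le> (if p < int q \<and> int q = i then 1 else B)"
  proof -
    consider "i < 0" | "i \<ge> 1" "j = 0" | "q \<ge> 1" "n = 0" | "p \<ge> 1" "m = 0"
      | "i \<ge> 0" "j \<ge> 1 \<or> i = 0" "\<not> (q \<ge> 1 \<and> n = 0)" "\<not> (p \<ge> 1 \<and> m = 0)"
      by linarith
    then show ?thesis
    proof cases
      case 1
      then have "coeff F i j = 0" unfolding coeff_def Fg by simp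
      then show ?thesis using B0 by simp
    next
      case 2
      then have "coeff F i j = 0" unfolding coeff_def by simp
      then show ?thesis using B0 by simp
    next
      case 3
      then have "gg p m q n = (\<lambda>_. 0)" unfolding gg_def haar_def by auto
      then show ?thesis using zc B0 by simp
    next
      case 4
      then have "gg p m q n = (\<lambda>_. 0)" unfolding gg_def using sch_eq[of p m] by (auto simp: sform_def)
      then show ?thesis using zc B0 by simp
    next
      case 5
      define I where "I = nat i"
      define J where "J = max j 1"
      have iI: "i = int I" unfolding I_def using 5 by simp
      have J1: "J \<ge> 1" unfolding J_def by simp
      have JI: "J \<le> 2^I" using assms(1) 5 unfolding J_def valid_index_def I_def by auto
      define a where "a = t0 I J"
      define c where "c = t1 I J"
      define b where "b = t2 I J"
      have a0: "0 \<le> a" unfolding a_def t0_def using J1 by simp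
      have ac: "a \<le> c" "c \<le> b" unfolding a_def b_def c_def by (rule t_ord)+
      have b1: "b \<le> 1" unfolding b_def t2_def using JI by simp
      have ba: "b - a = 1/2^I" unfolding a_def b_def t0_def t2_def by (simp add: field_simps)
      define G1 where "G1 = integral {a..c} (gg p m q n)"
      define G2 where "G2 = integral {c..b} (gg p m q n)"
      have Fc: "F c = F a + G1" unfolding Fg G1_def using comb[OF gg_int, of 0 a c] a0 ac by simp
      have Fb: "F b = F c + G2" unfolding Fg G2_def using comb[OF gg_int, of 0 c b] a0 ac by simp
      have cfj: "coeff F i j = G1 - G2" if "j \<ge> 1"
      proof -
        have "J = j" unfolding J_def using that by simp
        then have "coeff F i j = 2 * F c - F a - F b"
          unfolding coeff_def a_def b_def c_def I_def using 5 that by simp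
        then show ?thesis using Fc Fb by simp
      qed
      have cf: "\<bar>coeff F i j\<bar> \<le> \<bar>G1\<bar> + \<bar>G2\<bar>"
      proof (cases "j \<ge> 1")
        case True then show ?thesis using cfj by simp
      next
        case False
        then have j0: "j = 0" "i = 0" using 5 by auto
        then have "I = 0" "J = 1" unfolding I_def J_def by auto
        then have "a = 0" "b = 1" unfolding a_def b_def t0_def t2_def by auto
        moreover have "F 0 = 0" unfolding Fg by simp
        ultimately have "coeff F i j = G1 + G2" using Fc Fb j0 unfolding coeff_def by simp
        then show ?thesis by simp
      qed
      consider "int q > i \<and> int q > p" | "i > int q \<and> i > p" | "p \<ge> int q \<and> p \<ge> i"
        | "p < int q \<and> int q = i" by linarith
      then show ?thesis
      proof cases
        case 1
        have n1: "n \<ge> 1" using 5 1 by auto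
        have pq: "p < 0 \<or> nat p < q" using 1 by auto
        have Iq: "I < q" using 1 iI by simp
        note ts = t_scale[OF Iq J1]
        have "\<bar>G1\<bar> \<le> 2^q * 2 powr p * (1/2^(q+1))^2"
          unfolding G1_def by (rule caseA_half[OF n1 pq ac(1), where X="(J-1)*2^(q-I)" and Y="(2*J-1)*2^(q-I-1)"]) (simp_all add: a_def c_def ts)
        moreover have "\<bar>G2\<bar> \<le> 2^q * 2 powr p * (1/2^(q+1))^2"
          unfolding G2_def by (rule caseA_half[OF n1 pq ac(2), where X="(2*J-1)*2^(q-I-1)" and Y="J*2^(q-I)"]) (simp_all add: b_def c_def ts)
        ultimately have "\<bar>coeff F i j\<bar> \<le> 2 * (2^q * 2 powr p * (1/2^(q+1))^2)" using cf by linarith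
        also have "\<dots> = 2 * 2 powr (real q + p - 2 * real (q+1))" by (simp only: pw1)
        also have "\<dots> \<le> B" unfolding B_def using 1
          by (simp add: powr_mult_base powr_add[symmetric]) 
        finally show ?thesis using 1 by simp
      next
        case 2
        have j1: "j \<ge> 1" using 5 2 by auto
        have qI: "q < I" using 2 iI by simp
        have pI: "p < 0 \<or> nat p < I" using 2 iI by auto
        have "J = j" unfolding J_def using j1 by simp
        have "\<bar>coeff F i j\<bar> \<le> 2^q * 2 powr p * (1/2^(I+1))^2"
          using caseB[OF qI pI j1, of m n] cfj[OF j1] unfolding G1_def G2_def a_def b_def c_def \<open>J = j\<close>
          by simp
        also have "\<dots> = 2 powr (real q + p - 2 * real (I+1))" by (simp only: pw1)
        also have "\<dots> \<le> B" unfolding B_def using 2 iI by simp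
        finally show ?thesis using 2 by simp
      next
        case 3
        have p0: "p \<ge> 0" using 3 by simp
        show ?thesis
        proof (cases "m = 0")
          case True
          then have "p = 0" using 5 p0 by simp
          then have q0: "q = 0" "i = 0" using 3 5 by auto
          have gb: "\<bar>gg p m q n s\<bar> \<le> 1" if "0 \<le> s" "s \<le> 1" for s
          proof -
            have "\<bar>gg p m q n s\<bar> = \<bar>schauder p m s\<bar> * \<bar>haar q n s\<bar>" unfolding gg_def by (simp add: abs_mult)
            also have "\<dots> \<le> 1 * 1" using sch_bound01[OF that, of p m] haar_bound[of q n s] q0
              by (intro mult_mono) auto
            finally show ?thesis by simp
          qed
          have "\<bar>G1\<bar> \<le> 1 * (c - a)" unfolding G1_def
            by (rule crude[OF gg_int ac(1)]) (use gb a0 ac b1 in auto)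
          moreover have "\<bar>G2\<bar> \<le> 1 * (b - c)" unfolding G2_def
            by (rule crude[OF gg_int ac(2)]) (use gb a0 ac b1 in auto)
          moreover have "B = 1" unfolding B_def using q0 \<open>p = 0\<close> by simp
          ultimately show ?thesis using cf b1 a0 q0 by simp
        next
          case False
          define P where "P = nat p"
          have sP: "schauder p m = sform P m" unfolding P_def using sch_eq p0 by simp
          define K :: real where "K = 2^q/2"
          have gb: "\<bar>gg p m q n s\<bar> \<le> K" for s
          proof -
            have "\<bar>gg p m q n s\<bar> = \<bar>sform P m s\<bar> * \<bar>haar q n s\<bar>" unfolding gg_def sP by (simp add: abs_mult)
            also have "\<dots> \<le> (1/2) * 2^q" using sform_half[OF False, where P=P and s=s] haar_bound[of q n s]
              by (intro mult_mono) auto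
            finally show ?thesis unfolding K_def by simp
          qed
          have gz: "gg p m q n s = 0" if "s < t0 P m \<or> t2 P m < s" for s
            unfolding gg_def sP using sform_supp[OF False, where P=P and s=s] that by auto
          have dc: "t0 P m \<le> t2 P m" "t2 P m - t0 P m = 1/2^P"
            unfolding t0_def t2_def by (auto simp: field_simps)
          have "\<bar>G1\<bar> \<le> K * (t2 P m - t0 P m)" unfolding G1_def
            by (rule crude_supp[OF gg_int ac(1) dc(1)]) (use gb gz in \<open>auto simp: K_def\<close>)
          moreover have "\<bar>G2\<bar> \<le> K * (t2 P m - t0 P m)" unfolding G2_def
            by (rule crude_supp[OF gg_int ac(2) dc(1)]) (use gb gz in \<open>auto simp: K_def\<close>)
          ultimately have "\<bar>coeff F i j\<bar> \<le> 2^q * (1/2^P)" using cf unfolding dc(2) K_def by simp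
          also have "\<dots> = 2 powr (real q - real P)" by (rule pw2)
          also have "\<dots> = B" unfolding B_def P_def using 3 p0 by simp
          finally show ?thesis using 3 by simp
        qed
      next
        case 4
        have Iq: "I = q" using 4 iI by simp
        have gb: "\<bar>gg p m q n s\<bar> \<le> 2^q" if "0 \<le> s" "s \<le> 1" for s
        proof -
          have "\<bar>gg p m q n s\<bar> = \<bar>schauder p m s\<bar> * \<bar>haar q n s\<bar>" unfolding gg_def by (simp add: abs_mult)
          also have "\<dots> \<le> 1 * 2^q" using sch_bound01[OF that, of p m] haar_bound[of q n s]
            by (intro mult_mono) auto
          finally show ?thesis by simp
        qed
        have "\<bar>G1\<bar> \<le> 2^q * (c - a)" unfolding G1_def
          by (rule crude[OF gg_int ac(1)]) (use gb a0 ac b1 in auto)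
        moreover have "\<bar>G2\<bar> \<le> 2^q * (b - c)" unfolding G2_def
          by (rule crude[OF gg_int ac(2)]) (use gb a0 ac b1 in auto)
        ultimately have "\<bar>coeff F i j\<bar> \<le> 2^q * (b - a)" using cf by (simp add: algebra_simps)
        also have "\<dots> = 1" unfolding ba Iq by simp
        finally show ?thesis using 4 by simp
      qed
    qed
  qed
  show ?thesis
  proof (cases "p < int q \<and> int q = i")
    case True
    have "(if p < int q \<and> int q = i then 1 else B) = 1" using True by (rule if_P)
    then have "\<bar>coeff F i j\<bar> \<le> 1" using key by simp
    then show ?thesis by (simp only: if_P[OF True])
  next
    case False
    have "(if p < int q \<and> int q = i then 1 else B) = B" using False by (rule if_not_P)
    then have "\<bar>coeff F i j\<bar> \<le> B" using key by simp
    then show ?thesis unfolding B_def by (simp only: if_not_P[OF False])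
  qed
qed

end
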